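(* For every nonempty input word $u\in\{0,1,2\}^k$ ($k\ge 1$), the word $\mathcal{T}(u)\cdot\mathcal{T}_{\downarrow}(u)\in\{0,1\}^{k+2}$ satisfies \[ \mathrm{val}_{\mathcal{F}c}(u)=\mathrm{val}_{\mathcal{F}c}\big(\mathcal{T}(u)\cdot\mathcal{T}_{\downarrow}(u)\big). \]
   Context: Fibonacci numbers: $F_0=1$, $F_1=2$, $F_n=F_{n-1}+F_{n-2}$ for all $n\ge2$. For a word $w=w_{k-1}w_{k-2}\cdots w_0$ over $\{0,1,2\}$ (digits indexed from the right, $w_0$ the last letter), $\mathrm{val}_{\mathcal{F}}(w)=\sum_{i=0}^{k-1}w_iF_i$ (so $\mathrm{val}_{\mathcal F}(\varepsilon)=0$), and for nonempty $w$ of length $k$, $\mathrm{val}_{\mathcal{F}c}(w)=\sum_{i=0}^{k-1}w_iF_i-w_{k-1}F_k$. A Mealy machine reads an input word $u=u_0u_1\cdots u_{k-1}$ from left to right starting in its initial state; each transition $p\xrightarrow{a/b}q$ reads input letter $a$, outputs the (possibly empty) word $b$ and moves to state $q$. $M(u)$ denotes the concatenation of the outputs, and $M_{\downarrow}(u)$ denotes the extra output word attached to the state reached after reading $u$. The Berstel adder $\mathcal{B}$ has the 10 states $000.0,\ 001.1,\ 001.2,\ 010.3,\ 010.4,\ 100.5,\ 100.6,\ 101.6,\ 101.7,\ 000.1$, initial state $000.0$, and the 30 transitions (written state: input/output $\to$ next state): $000.0$: $0/0\to000.0$, $1/0\to001.2$, $2/0\to010.4$; $001.2$: $0/0\to010.3$,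 $1/0\to100.5$, $2/0\to101.7$; $010.4$: $0/0\to101.6$, $1/1\to000.0$, $2/1\to001.2$; $010.3$: $0/0\to100.5$, $1/0\to101.7$, $2/1\to000.1$; $100.5$: $0/1\to000.0$, $1/1\to001.2$, $2/1\to010.4$; $101.7$: $0/1\to010.3$, $1/1\to100.5$, $2/1\to101.7$; $101.6$: $0/1\to001.2$, $1/1\to010.4$, $2/1\to100.6$; $000.1$: $0/0\to001.1$, $1/0\to010.3$, $2/0\to100.5$; $100.6$: $0/1\to001.1$, $1/1\to010.3$, $2/1\to100.5$; $001.1$: $0/0\to001.2$, $1/0\to010.4$, $2/0\to100.6$. The extra output word of a state $xyz.j$ is the three-letter binary word $xyz$. The machine $\mathcal{T}$ is obtained from $\mathcal{B}$ by adding a new state $\mathtt{start}$, which becomes the initial state, with the three transitions $\mathtt{start}\xrightarrow{0/\varepsilon}000.0$, $\mathtt{start}\xrightarrow{1/\varepsilon}101.7$, $\mathtt{start}\xrightarrow{2/\varepsilon}100.6$ (empty output), and with extra output word $000$ at $\mathtt{start}$; all other states, transitions and extra outputs are as in $\mathcal{B}$. *)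

theory Defs
  imports Main
begin

fun fibF :: "nat \<Rightarrow> int" where
  "fibF 0 = 1"
| "fibF (Suc 0) = 2"
| "fibF (Suc (Suc n)) = fibF (Suc n) + fibF n"

text \<open>Words are lists of digits; the head of the list is the leftmost letter.
  For w = w_{k-1} ... w_0 (length k), the list is [w_{k-1}, ..., w_0],
  so the digit w_i is the list entry at position k-1-i.\<close>
definition valF :: "nat list \<Rightarrow> int" where
  "valF w = (\<Sum>i<length w. int (w ! (length w - 1 - i)) * fibF i)"

definition valFc :: "nat list \<Rightarrow> int" where
  "valFc w = valF w - int (hd w) * fibF (length w)"

datatype state = S000_0 | S001_1 | S001_2 | S010_3 | S010_4 | S100_5 | S100_6
  | S101_6 | S101_7 | S000_1 | Start

text \<open>Transition function of T: (output word, next state). Letters outside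
  {0,1,2} are never used (the theorem assumes the input is over {0,1,2}).\<close>
definition tr :: "(nat list \<times> state) \<Rightarrow> (nat list \<times> state) \<Rightarrow> (nat list \<times> state)
    \<Rightarrow> nat \<Rightarrow> nat list \<times> state" where
  "tr t0 t1 t2 a = (if a = 0 then t0 else if a = 1 then t1 else t2)"

fun delta :: "state \<Rightarrow> nat \<Rightarrow> nat list \<times> state" where
  "delta S000_0 a = tr ([0], S000_0) ([0], S001_2) ([0], S010_4) a"
| "delta S001_2 a = tr ([0], S010_3) ([0], S100_5) ([0], S101_7) a"
| "delta S010_4 a = tr ([0], S101_6) ([1], S000_0) ([1], S001_2) a"
| "delta S010_3 a = tr ([0], S100_5) ([0], S101_7) ([1], S000_1) a"
| "delta S100_5 a = tr ([1], S000_0) ([1], S001_2) ([1], S010_4) a"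
| "delta S101_7 a = tr ([1], S010_3) ([1], S100_5) ([1], S101_7) a"
| "delta S101_6 a = tr ([1], S001_2) ([1], S010_4) ([1], S100_6) a"
| "delta S000_1 a = tr ([0], S001_1) ([0], S010_3) ([0], S100_5) a"
| "delta S100_6 a = tr ([1], S001_1) ([1], S010_3) ([1], S100_5) a"
| "delta S001_1 a = tr ([0], S001_2) ([0], S010_4) ([0], S100_6) a"
| "delta Start a = tr ([], S000_0) ([], S101_7) ([], S100_6) a"

text \<open>Extra (final) output word attached to each state: xyz for state xyz.j, 000 for start.\<close>
fun extra :: "state \<Rightarrow> nat list" where
  "extra S000_0 = [0,0,0]"
| "extra S001_1 = [0,0,1]"
| "extra S001_2 = [0,0,1]"
| "extra S010_3 = [0,1,0]"
| "extra S010_4 = [0,1,0]"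
| "extra S100_5 = [1,0,0]"
| "extra S100_6 = [1,0,0]"
| "extra S101_6 = [1,0,1]"
| "extra S101_7 = [1,0,1]"
| "extra S000_1 = [0,0,0]"
| "extra Start = [0,0,0]"

fun run :: "state \<Rightarrow> nat list \<Rightarrow> nat list \<times> state" where
  "run q [] = ([], q)"
| "run q (a # u) = (let (o1, q1) = delta q a; (o2, q2) = run q1 u in (o1 @ o2, q2))"

definition T :: "nat list \<Rightarrow> nat list" where
  "T u = fst (run Start u)"

definition T_down :: "nat list \<Rightarrow> nat list" where
  "T_down u = extra (snd (run Start u))"

end

theory Submission
  imports Defs
begin

lemma valF_Cons: "valF (x # xs) = int x * fibF (length xs) + valF xs"
proof -
  have "(\<Sum>i<length xs. int ((x # xs) ! (length xs - i)) * fibF i)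
      = (\<Sum>i<length xs. int (xs ! (length xs - 1 - i)) * fibF i)"
  proof (rule sum.cong)
    fix i assume "i \<in> {..<length xs}"
    then have "length xs - i = Suc (length xs - 1 - i)" by auto
    then show "int ((x # xs) ! (length xs - i)) * fibF i = int (xs ! (length xs - 1 - i)) * fibF i"
      by simp
  qed simp
  then show ?thesis unfolding valF_def by (simp add: sum.lessThan_Suc)
qed

lemma f3p[simp]: "fibF (n + 3) = 2 * fibF (Suc n) + fibF n"
  by (simp add: numeral_3_eq_3)

fun al :: "state \<Rightarrow> int" where
  "al S000_0 = 0" | "al S001_2 = 1" | "al S010_4 = 2" | "al S010_3 = 0" | "al S100_5 = 1"
| "al S101_7 = 2" | "al S101_6 = 0" | "al S000_1 = 2" | "al S100_6 = 3" | "al S001_1 = -1"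
| "al Start = 0"

fun be :: "state \<Rightarrow> int" where
  "be S000_0 = 0" | "be S001_2 = 0" | "be S010_4 = 0" | "be S010_3 = 1" | "be S100_5 = 1"
| "be S101_7 = 1" | "be S101_6 = 2" | "be S000_1 = -1" | "be S100_6 = 0" | "be S001_1 = 1"
| "be Start = 0"

lemma step:
  assumes "q \<noteq> Start" "a \<in> {0,1,2}"
  shows "\<exists>b q1. delta q a = ([b], q1) \<and> b \<in> {0,1} \<and> q1 \<noteq> Start \<and>
     al q * fibF (Suc n) + be q * fibF (Suc (Suc n)) + int a * fibF n
     = int b * fibF (Suc (Suc (Suc n))) + al q1 * fibF n + be q1 * fibF (Suc n)"
  using assms by (cases q; auto simp: tr_def)

lemma inv:
  "set w \<subseteq> {0,1,2} \<Longrightarrow> q \<noteq> Start \<Longrightarrow>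
   length (fst (run q w)) = length w \<and> set (fst (run q w)) \<subseteq> {0,1} \<and> snd (run q w) \<noteq> Start \<and>
   valF (fst (run q w) @ extra (snd (run q w))) = valF w + al q * fibF (length w) + be q * fibF (Suc (length w))"
proof (induction w arbitrary: q)
  case Nil
  then show ?case by (cases q) (auto simp: valF_def)
next
  case (Cons a w)
  obtain b q1 where d: "delta q a = ([b], q1)" "b \<in> {0,1}" "q1 \<noteq> Start"
    and e: "al q * fibF (Suc (length w)) + be q * fibF (Suc (Suc (length w))) + int a * fibF (length w)
     = int b * fibF (Suc (Suc (Suc (length w)))) + al q1 * fibF (length w) + be q1 * fibF (Suc (length w))"
    using step[of q a "length w"] Cons.prems by auto
  have IH: "length (fst (run q1 w)) = length w \<and> set (fst (run q1 w)) \<subseteq> {0,1} \<and> snd (run q1 w) \<noteq> Start \<and>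
   valF (fst (run q1 w) @ extra (snd (run q1 w))) = valF w + al q1 * fibF (length w) + be q1 * fibF (Suc (length w))"
    using Cons.IH[OF _ d(3)] Cons.prems by auto
  have r: "run q (a # w) = (b # fst (run q1 w), snd (run q1 w))"
    using d by (simp add: case_prod_beta)
  have len: "length (extra s) = 3" for s by (cases s) auto
  show ?case using IH d e unfolding r
    by (simp add: valF_Cons len valF_Cons[of a w] algebra_simps)
qed

theorem mainTheorem1:
  fixes u :: "nat list"
  assumes "u \<noteq> []" and "set u \<subseteq> {0, 1, 2}"
  shows "set (T u @ T_down u) \<subseteq> {0, 1}
         \<and> length (T u @ T_down u) = length u + 2
         \<and> valFc u = valFc (T u @ T_down u)"
proof -
  obtain a w where u: "u = a # w" using assms(1) by (cases u) auto
  have a: "a \<in> {0,1,2}" and w: "set w \<subseteq> {0,1,2}" using assms(2) u by auto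
  have len: "length (extra s) = 3" for s by (cases s) auto
  have ex: "set (extra s) \<subseteq> {0,1}" for s by (cases s) auto
  define q1 where "q1 = snd (delta Start a)"
  have ds: "delta Start a = ([], q1)" using a by (auto simp: q1_def tr_def)
  have q1: "q1 \<noteq> Start" using a by (auto simp: q1_def tr_def)
  have r: "run Start u = run q1 w" using ds u by (simp add: case_prod_beta)
  note I = inv[OF w q1]
  have hd: "hd (fst (run q1 w) @ extra (snd (run q1 w))) = (if a = 0 then 0 else 1)"
  proof (cases w)
    case Nil then show ?thesis using a by (auto simp: q1_def tr_def)
  next
    case (Cons c w') then show ?thesis using a w
      by (auto simp: q1_def tr_def case_prod_beta)
  qed
  have f3: "fibF (Suc (Suc (Suc n))) = 2 * fibF (Suc n) + fibF n" for n by simp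
  have v: "valFc (T u @ T_down u) = valF (fst (run q1 w) @ extra (snd (run q1 w)))
     - (if a = 0 then 0 else 1) * fibF (length w + 3)"
    unfolding T_def T_down_def r valFc_def hd using I len[of "snd (run q1 w)"] by simp
  have v2: "valFc u = int a * fibF (length w) + valF w - int a * fibF (Suc (length w))"
    unfolding u valFc_def by (simp add: valF_Cons)
  show ?thesis
    using I ex[of "snd (run q1 w)"] len[of "snd (run q1 w)"] a
    unfolding v v2 unfolding T_def T_down_def r u
    by (auto simp: q1_def tr_def algebra_simps)
qed

end
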